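(* For every base $b\ge 2$ there exist infinitely many positive integers that are not $b$-wMRH numbers.
   Context: Fix a base $b\ge 2$. $s_b(N)$ is the sum of the base-$b$ digits of $N$. For a positive integer $X$, its reversal $X^R$ is the integer whose base-$b$ representation is that of $X$ written in reverse order (leading zeros of the result are dropped). A positive integer $N$ is a $b$-wMRH number if there exists an integer $A\ge 0$ such that $N=(A+s_b(N))\cdot(A+s_b(N))^R$. *)

theory Defs
  imports Main
begin

fun digits :: "nat \<Rightarrow> nat \<Rightarrow> nat list" where
  "digits b n = (if b < 2 \<or> n = 0 then [] else n mod b # digits b (n div b))"

declare digits.simps[simp del]

definition digit_sum :: "nat \<Rightarrow> nat \<Rightarrow> nat" where
  "digit_sum b n = sum_list (digits b n)"

fun from_digits :: "nat \<Rightarrow> nat list \<Rightarrow> nat" where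
  "from_digits b [] = 0"
| "from_digits b (d # ds) = d + b * from_digits b ds"

text \<open>Reversal: reading the base-b representation backwards; leading zeros vanish automatically.\<close>
definition reversal :: "nat \<Rightarrow> nat \<Rightarrow> nat" where
  "reversal b x = from_digits b (rev (digits b x))"

definition wMRH :: "nat \<Rightarrow> nat \<Rightarrow> bool" where
  "wMRH b N \<longleftrightarrow> N > 0 \<and>
     (\<exists>A::nat. N = (A + digit_sum b N) * reversal b (A + digit_sum b N))"

end

theory Submission
  imports Defs "HOL-Computational_Algebra.Primes"
begin

lemma digits_pos: "b \<ge> 2 \<Longrightarrow> X > 0 \<Longrightarrow> digits b X = X mod b # digits b (X div b)"
  by (subst digits.simps) auto

lemma digits_nil: "b \<ge> 2 \<Longrightarrow> digits b X = [] \<longleftrightarrow> X = 0"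
  by (subst digits.simps) auto

lemma from_digits_snoc: "from_digits b (xs @ [d]) = from_digits b xs + b ^ length xs * d"
  by (induction xs) (auto simp: algebra_simps)

lemma rev_ge: "b \<ge> 2 \<Longrightarrow> X > 0 \<Longrightarrow>
   reversal b X \<ge> b ^ length (digits b (X div b)) * (X mod b)"
  unfolding reversal_def using digits_pos[of b X] by (simp add: from_digits_snoc)

lemma prime_not_wMRH:
  assumes b: "b \<ge> 2" and p: "prime (p::nat)" and pb: "p \<noteq> b"
  shows "\<not> wMRH b p"
proof
  assume "wMRH b p"
  then obtain X where eq: "p = X * reversal b X" unfolding wMRH_def by blast
  have X0: "X > 0" using eq p by (cases "X = 0") auto
  have one: "X = 1 \<or> reversal b X = 1" using eq p prime_product by metis
  have r1: "reversal b 1 = 1"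
  proof -
    have "digits b 1 = [1]" using digits_pos[of b 1] b digits_nil[of b 0] by simp
    thus ?thesis unfolding reversal_def by simp
  qed
  show False
  proof (cases "X = 1")
    case True thus False using eq r1 p by simp
  next
    case False
    hence R: "reversal b X = 1" using one by auto
    hence pX: "p = X" using eq by simp
    show False
    proof (cases "X mod b = 0")
      case True
      hence "b dvd p" using pX by auto
      thus False using p pb b by (metis prime_nat_iff numeral_le_one_iff semiring_norm(69) not_numeral_le_zero
          nat_dvd_not_less one_le_numeral)
    next
      case nz: False
      have "b ^ length (digits b (X div b)) * (X mod b) \<le> 1" using rev_ge[OF b X0] R by simp
      moreover have "b ^ length (digits b (X div b)) \<le> b ^ length (digits b (X div b)) * (X mod b)"
        using nz by simp
      ultimately have "b ^ length (digits b (X div b)) \<le> 1" by linarith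
      hence bl: "b ^ length (digits b (X div b)) \<le> 1" .
      have "length (digits b (X div b)) = 0"
      proof (rule ccontr)
        assume "length (digits b (X div b)) \<noteq> 0"
        hence "1 < b ^ length (digits b (X div b))" using b by (intro one_less_power) auto
        thus False using \<open>b ^ length (digits b (X div b)) \<le> 1\<close> by simp
      qed
      hence "X div b = 0" using digits_nil[OF b] by simp
      hence "X < b" using b by (simp add: div_eq_0_iff)
      hence "digits b X = [X]" using digits_pos[OF b X0] digits_nil[OF b, of 0] by simp
      hence "reversal b X = X" unfolding reversal_def by simp
      thus False using R False by simp
    qed
  qed
qed

theorem proposition16:
  fixes b :: nat
  assumes "b \<ge> 2"
  shows "infinite {N::nat. N > 0 \<and> \<not> wMRH b N}"
proof -
  have "{p. prime p} - {b} \<subseteq> {N::nat. N > 0 \<and> \<not> wMRH b N}"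
    using prime_not_wMRH[OF assms] prime_gt_0_nat by auto
  moreover have "infinite ({p::nat. prime p} - {b})" using primes_infinite by simp
  ultimately show ?thesis using infinite_super by blast
qed

end
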